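(* Let $\mathbf{P}=\{p_n(x)\}_{n\ge0}$ be the Sheffer sequence for the pair $(1,f(t))$, where $f$ is odd, i.e. $f(-t)=-f(t)$. Then for $n\ge1$ and $0\le k\le n-1$, $$A_{n,k}(\mathbf{P})=A_{n,n-1-k}(\mathbf{P}).$$
   Context: $f$ is a formal power series over $\mathbb{C}$ with $f(0)=0$, $f'(0)\ne0$, and $\bar f$ its compositional inverse; $\{p_n\}$ is Sheffer for $(1,f)$ iff $\sum_{n\ge0}p_n(x)\frac{t^n}{n!}=e^{x\bar f(t)}$. The Eulerian numbers $A_{n,k}(\mathbf{P})$ ($0\le k\le n$) are the unique coefficients with $p_n(x)=\sum_{k=0}^{n}A_{n,k}(\mathbf{P})\binom{x+n-k-1}{n}$, where $\binom{y}{n}=y(y-1)\cdots(y-n+1)/n!$. *)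

theory Defs
  imports "HOL-Computational_Algebra.Computational_Algebra"
begin

(* Sheffer sequence for (1,f): sum_n p_n(x) t^n/n! = exp(x * fbar(t)),
   fbar = compositional inverse fps_inv f; exp(x*fbar(t)) = fps_exp x oo fps_inv f. *)
definition sheffer_1 :: "complex fps \<Rightarrow> (nat \<Rightarrow> complex poly) \<Rightarrow> bool" where
  "sheffer_1 f p \<longleftrightarrow>
     (\<forall>n x. poly (p n) x = fact n * ((fps_exp x oo fps_inv f) $ n))"

definition eulerian_coeffs :: "(nat \<Rightarrow> complex poly) \<Rightarrow> (nat \<Rightarrow> nat \<Rightarrow> complex) \<Rightarrow> bool" where
  "eulerian_coeffs p A \<longleftrightarrow>
     (\<forall>n x. poly (p n) x =
        (\<Sum>k=0..n. A n k * ((x + of_nat n - of_nat k - 1) gchoose n)))"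

end

theory Submission
  imports Defs
begin


lemma g_odd:
  fixes f :: "complex fps"
  assumes f0: "f $ 0 = 0" and f1: "f $ 1 \<noteq> 0" and odd: "f oo (- fps_X) = - f"
  shows "fps_inv f oo (- fps_X) = - fps_inv f"
proof -
  define g where "g = fps_inv f"
  have g0: "g $ 0 = 0" by (simp add: g_def fps_inv_def)
  have mX0: "(- fps_X :: complex fps) $ 0 = 0" by simp
  have fg: "f oo g = fps_X" using fps_inv_right[OF f0 f1] by (simp add: g_def)
  have gf: "g oo f = fps_X" using fps_inv[OF f0 f1] by (simp add: g_def)
  have h1: "f oo (g oo (- fps_X)) = - fps_X"
    using fps_compose_assoc[OF mX0 g0, of f] fg by simp
  have "(- fps_X) oo g = - g" using g0 by (simp add: fps_compose_uminus)
  hence h2: "f oo (- g) = - fps_X"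
    using fps_compose_assoc[OF g0 mX0, of f] odd fg by (simp add: fps_compose_uminus)
  have c1: "(g oo (- fps_X)) $ 0 = 0" by (simp add: g0)
  have c2: "(- g) $ 0 = 0" by (simp add: g0)
  have "g oo (f oo (g oo (- fps_X))) = g oo (f oo (- g))" using h1 h2 by simp
  hence "(g oo f) oo (g oo (- fps_X)) = (g oo f) oo (- g)"
    using fps_compose_assoc[OF c1 f0, of g] fps_compose_assoc[OF c2 f0, of g] by simp
  hence "g oo (- fps_X) = - g" using gf c1 c2 by simp
  thus ?thesis by (simp add: g_def)
qed

lemma p_neg:
  fixes f :: "complex fps"
  assumes f0: "f $ 0 = 0" and f1: "f $ 1 \<noteq> 0" and odd: "f oo (- fps_X) = - f"
    and sh: "sheffer_1 f p"
  shows "poly (p n) (-x) = (-1)^n * poly (p n) x"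
proof -
  define g where "g = fps_inv f"
  have g0: "g $ 0 = 0" by (simp add: g_def fps_inv_def)
  have mX0: "(- fps_X :: complex fps) $ 0 = 0" by simp
  have go: "g oo (- fps_X) = - g" using g_odd[OF f0 f1 odd] by (simp add: g_def)
  have "fps_exp (-x) oo g = (fps_exp x oo (- fps_X)) oo g" by simp
  also have "\<dots> = fps_exp x oo ((- fps_X) oo g)" using fps_compose_assoc[OF g0 mX0] by simp
  also have "\<dots> = fps_exp x oo (g oo (- fps_X))" using g0 go by (simp add: fps_compose_uminus)
  also have "\<dots> = (fps_exp x oo g) oo (- fps_X)" using fps_compose_assoc[OF mX0 g0] by simp
  finally have "(fps_exp (-x) oo g) $ n = (-1)^n * (fps_exp x oo g) $ n"
    by (simp add: fps_compose_uminus')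
  thus ?thesis using sh unfolding sheffer_1_def g_def by simp
qed

lemma p_zero:
  assumes sh: "sheffer_1 f p" and "n \<ge> 1"
  shows "poly (p n) 0 = 0"
  using assms unfolding sheffer_1_def by simp

lemma uniq:
  fixes c :: "nat \<Rightarrow> complex"
  assumes h: "\<And>x. (\<Sum>j=0..n. c j * ((x + of_nat n - of_nat j - 1) gchoose n)) = 0"
  shows "j \<le> n \<Longrightarrow> c j = 0"
proof (induction j rule: less_induct)
  case (less j)
  have "(\<Sum>i=0..n. c i * ((of_nat (j+1) + of_nat n - of_nat i - 1) gchoose n))
        = (\<Sum>i=0..n. if i = j then c j else 0)"
  proof (rule sum.cong[OF refl])
    fix i assume i: "i \<in> {0..n}"
    show "c i * ((of_nat (j+1) + of_nat n - of_nat i - 1) gchoose n) = (if i = j then c j else 0)"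
    proof (cases "i < j")
      case True then show ?thesis using less.IH[of i] less.prems by simp
    next
      case False
      hence "(of_nat (j+1) + of_nat n - of_nat i - 1 :: complex) = of_nat (n + j - i)"
        using i by (simp add: of_nat_diff)
      hence e: "((of_nat (j+1) + of_nat n - of_nat i - 1 :: complex) gchoose n) = of_nat ((n + j - i) choose n)"
        by (simp add: binomial_gbinomial)
      show ?thesis
      proof (cases "i = j")
        case True then show ?thesis using e by simp
      next
        case False
        with \<open>\<not> i < j\<close> have "n + j - i < n" using i by auto
        then show ?thesis using e False by simp
      qed
    qed
  qed
  also have "\<dots> = c j" using less.prems by simp
  finally show ?case using h[of "of_nat (j+1)"] by simp
qed


theorem theorem3p3:
  fixes f :: "complex fps" and p :: "nat \<Rightarrow> complex poly" and A :: "nat \<Rightarrow> nat \<Rightarrow> complex"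
  assumes "fps_nth f 0 = 0" and "fps_nth f 1 \<noteq> 0"
    and "f oo (- fps_X) = - f"
    and "sheffer_1 f p"
    and "eulerian_coeffs p A"
    and "n \<ge> 1" and "k \<le> n - 1"
  shows "A n k = A n (n - 1 - k)"
proof -
  obtain m where nm: "n = Suc m" using assms(6) by (cases n) auto
  define b where "b = (\<lambda>j (x::complex). (x + of_nat n - of_nat j - 1) gchoose n)"
  have E: "poly (p n) x = (\<Sum>j=0..n. A n j * b j x)" for x
    using assms(5) unfolding eulerian_coeffs_def b_def by simp
  have "poly (p n) 0 = (\<Sum>j=0..n. A n j * b j 0)" by (rule E)
  also have "\<dots> = (\<Sum>j=0..n. if j = n then A n n * (-1)^n else 0)"
  proof (rule sum.cong[OF refl])
    fix j assume j: "j \<in> {0..n}"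
    show "A n j * b j 0 = (if j = n then A n n * (-1)^n else 0)"
    proof (cases "j = n")
      case True
      have "b j 0 = (-1) gchoose n" using True by (simp add: b_def)
      also have "\<dots> = (-1)^n" by (subst gbinomial_negated_upper) (simp flip: binomial_gbinomial)
      finally show ?thesis using True by simp
    next
      case False
      hence "(0 + of_nat n - of_nat j - 1 :: complex) = of_nat (n - j - 1)"
        using j by (simp add: of_nat_diff)
      hence "b j 0 = of_nat ((n - j - 1) choose n)" by (simp add: b_def binomial_gbinomial)
      also have "\<dots> = 0" using j assms(6) by simp
      finally show ?thesis using False by simp
    qed
  qed
  also have "\<dots> = A n n * (-1)^n" by simp
  finally have An: "A n n = 0" using p_zero[OF assms(4,6)] by simp
  have R: "b j (-x) = (-1)^n * ((x + of_nat j) gchoose n)" for j x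
    unfolding b_def by (subst gbinomial_negated_upper) (simp add: algebra_simps)
  have P: "poly (p n) x = (\<Sum>j=0..m. A n (m - j) * b j x)" for x
  proof -
    have "poly (p n) x = (-1)^n * poly (p n) (-x)"
      using p_neg[OF assms(1-4), of n "-x"] by simp
    also have "\<dots> = (-1)^n * (\<Sum>j=0..n. A n j * b j (-x))" by (simp add: E)
    also have "\<dots> = (\<Sum>j=0..n. A n j * ((x + of_nat j) gchoose n))"
      by (simp add: R sum_distrib_left algebra_simps)
    also have "\<dots> = (\<Sum>j=0..m. A n j * ((x + of_nat j) gchoose n))"
      using An nm by simp
    also have "\<dots> = (\<Sum>j=0..m. A n (m - j) * ((x + of_nat (m - j)) gchoose n))"
      using sum.atLeastAtMost_rev[of "\<lambda>j. A n j * ((x + of_nat j) gchoose n)" 0 m] by simp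
    also have "\<dots> = (\<Sum>j=0..m. A n (m - j) * b j x)"
      by (rule sum.cong[OF refl]) (auto simp: b_def nm of_nat_diff)
    finally show ?thesis .
  qed
  define c where "c = (\<lambda>j. A n j - (if j \<le> m then A n (m - j) else 0))"
  have "(\<Sum>j=0..n. c j * ((x + of_nat n - of_nat j - 1) gchoose n)) = 0" for x
  proof -
    have "(\<Sum>j=0..n. c j * b j x) = (\<Sum>j=0..n. A n j * b j x) - (\<Sum>j=0..n. (if j \<le> m then A n (m - j) else 0) * b j x)"
      by (simp add: c_def algebra_simps sum_subtractf)
    also have "(\<Sum>j=0..n. (if j \<le> m then A n (m - j) else 0) * b j x) = (\<Sum>j=0..m. A n (m - j) * b j x)"
      using nm by simp
    finally show ?thesis using E[of x] P[of x] by (simp add: b_def)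
  qed
  hence "c k = 0" using uniq[where c=c and n=n and j=k] assms(7) nm by simp
  thus ?thesis using assms(7) nm by (simp add: c_def)
qed

end
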